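(* Let $(G,Y)$ be a $C$-group. Every element $g\in G$ can be written as $g=g_1g_2^{-1}$ with $g_1,g_2$ positive elements; and for such a representation, $g\in[G,G]$ if and only if $\mathrm{ab}(g_1)=\mathrm{ab}(g_2)$. If moreover $(G,Y)$ is a finite $C$-group, then every $g\in G$ has such a representation with $g_2=\alpha_G(s_\Gamma^n)$ for some $n\ge0$ and $g_1=\alpha_G(s_1)$ for some $s_1\in S(G,Y)^G$.
   Context: A $C$-group is a pair $(G,Y)$ with $Y$ a conjugation-invariant subset of the group $G$ consisting of finitely many conjugacy classes, $1\notin Y$, such that $G$ has a presentation with generators the elements of $Y$ and defining relations all of the form $z^{-1}yz=y'$ ($y,y',z\in Y$); it is finite if $Y$ is finite. $\mathrm{ab}:G\to G/[G,G]$ is the abelianization map. The factorization semigroup $S(G,Y)$ is generated by symbols $x_y$, $y\in Y$, subject to $x_{g_1}x_{g_2}=x_{g_2}x_{g_2^{-1}g_1g_2}=x_{g_1g_2g_1^{-1}}x_{g_1}$; $\alpha_G:S(G,Y)\to G$, $x_y\mapsto y$. An element $g\in G$ is positive if $g=\alpha_G(s)$ for some $s\in S(G,Y)$. For $s=x_{g_1}\cdots x_{g_n}$, $G_s$ is the subgroup generated by the $g_j$, and $S(G,Y)^G=\{s:G_s=G\}$. For finite $(G,Y)$: $Y=C_1\sqcup\dots\sqcup C_m$ (conjugacy classes, $C_i=\{y_{i,1},\dots,y_{i,n_i}\}$), $p_i$ the least $p\ge1$ with $y^p$ central for $y\in C_i$, and $s_\Gamma=\prod_{i=1}^m\prod_{j=1}^{n_i}x_{y_{i,j}}^{p_i}$.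 *)

theory Defs
  imports "HOL-Algebra.Algebra"
begin

text \<open>Words in the free group on Y: a letter (y, True) stands for y, (y, False) for y^-1.\<close>

definition eval_word :: "('a, 'b) monoid_scheme \<Rightarrow> ('a \<times> bool) list \<Rightarrow> 'a" where
  "eval_word G w = foldr (\<lambda>(y, b) acc. (if b then y else inv\<^bsub>G\<^esub> y) \<otimes>\<^bsub>G\<^esub> acc) w \<one>\<^bsub>G\<^esub>"

text \<open>Two words are congruent iff
  they represent the same element of the group presented by generators Y and these
  defining relations.\<close>

inductive pres_cong :: "('a, 'b) monoid_scheme \<Rightarrow> 'a set \<Rightarrow> ('a \<times> bool) list \<Rightarrow> ('a \<times> bool) list \<Rightarrow> bool"
  for G Y where
  pc_refl: "pres_cong G Y w w"
| pc_sym: "pres_cong G Y u v \<Longrightarrow> pres_cong G Y v u"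
| pc_trans: "pres_cong G Y u v \<Longrightarrow> pres_cong G Y v w \<Longrightarrow> pres_cong G Y u w"
| pc_ctxt: "set (map fst a) \<subseteq> Y \<Longrightarrow> set (map fst c) \<subseteq> Y \<Longrightarrow>
     pres_cong G Y u v \<Longrightarrow> pres_cong G Y (a @ u @ c) (a @ v @ c)"
| pc_cancel: "y \<in> Y \<Longrightarrow> pres_cong G Y [(y, b), (y, \<not> b)] []"
| pc_rel: "y \<in> Y \<Longrightarrow> y' \<in> Y \<Longrightarrow> z \<in> Y \<Longrightarrow> inv\<^bsub>G\<^esub> z \<otimes>\<^bsub>G\<^esub> y \<otimes>\<^bsub>G\<^esub> z = y' \<Longrightarrow>
     pres_cong G Y [(z, False), (y, True), (z, True)] [(y', True)]"

definition conj_class :: "('a, 'b) monoid_scheme \<Rightarrow> 'a \<Rightarrow> 'a set" where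
  "conj_class G y = {g \<otimes>\<^bsub>G\<^esub> y \<otimes>\<^bsub>G\<^esub> inv\<^bsub>G\<^esub> g | g. g \<in> carrier G}"

text \<open>(G, Y) is a C-group: Y is a conjugation-invariant subset of G not containing 1,
  consisting of finitely many conjugacy classes, and the natural map from the group
  presented by generators Y and relations z^-1 y z = y' onto G is an isomorphism
  (Y generates G, and every relation among words over Y is a consequence of the
  defining relations).\<close>

definition C_group :: "('a, 'b) monoid_scheme \<Rightarrow> 'a set \<Rightarrow> bool" where
  "C_group G Y \<longleftrightarrow> group G \<and> Y \<subseteq> carrier G \<and> \<one>\<^bsub>G\<^esub> \<notin> Y
    \<and> (\<forall>g \<in> carrier G. \<forall>y \<in> Y. g \<otimes>\<^bsub>G\<^esub> y \<otimes>\<^bsub>G\<^esub> inv\<^bsub>G\<^esub> g \<in> Y)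
    \<and> finite (conj_class G ` Y)
    \<and> (\<forall>g \<in> carrier G. \<exists>w. set (map fst w) \<subseteq> Y \<and> eval_word G w = g)
    \<and> (\<forall>u v. set (map fst u) \<subseteq> Y \<longrightarrow> set (map fst v) \<subseteq> Y \<longrightarrow>
          eval_word G u = eval_word G v \<longrightarrow> pres_cong G Y u v)"

definition finite_C_group :: "('a, 'b) monoid_scheme \<Rightarrow> 'a set \<Rightarrow> bool" where
  "finite_C_group G Y \<longleftrightarrow> C_group G Y \<and> finite Y"

definition ab :: "('a, 'b) monoid_scheme \<Rightarrow> 'a \<Rightarrow> 'a set" where
  "ab G g = derived G (carrier G) #>\<^bsub>G\<^esub> g"

text \<open>Elements of S(G,Y) are represented by words in the symbols x_y (y in Y), i.e. lists of
  elements of Y (the empty word is the identity 1 of S(G,Y)), modulo the congruence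
  generated by the Hurwitz relations.\<close>

inductive fact_cong :: "('a, 'b) monoid_scheme \<Rightarrow> 'a set \<Rightarrow> 'a list \<Rightarrow> 'a list \<Rightarrow> bool"
  for G Y where
  fc_refl: "fact_cong G Y w w"
| fc_sym: "fact_cong G Y u v \<Longrightarrow> fact_cong G Y v u"
| fc_trans: "fact_cong G Y u v \<Longrightarrow> fact_cong G Y v w \<Longrightarrow> fact_cong G Y u w"
| fc_ctxt: "set a \<subseteq> Y \<Longrightarrow> set c \<subseteq> Y \<Longrightarrow> fact_cong G Y u v \<Longrightarrow> fact_cong G Y (a @ u @ c) (a @ v @ c)"
| fc_move1: "g1 \<in> Y \<Longrightarrow> g2 \<in> Y \<Longrightarrow>
     fact_cong G Y [g1, g2] [g2, inv\<^bsub>G\<^esub> g2 \<otimes>\<^bsub>G\<^esub> g1 \<otimes>\<^bsub>G\<^esub> g2]"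
| fc_move2: "g1 \<in> Y \<Longrightarrow> g2 \<in> Y \<Longrightarrow>
     fact_cong G Y [g1, g2] [g1 \<otimes>\<^bsub>G\<^esub> g2 \<otimes>\<^bsub>G\<^esub> inv\<^bsub>G\<^esub> g1, g1]"

definition fact_class :: "('a, 'b) monoid_scheme \<Rightarrow> 'a set \<Rightarrow> 'a list \<Rightarrow> 'a list set" where
  "fact_class G Y w = {v. set v \<subseteq> Y \<and> fact_cong G Y w v}"

definition fact_sg :: "('a, 'b) monoid_scheme \<Rightarrow> 'a set \<Rightarrow> 'a list set set" where
  "fact_sg G Y = {fact_class G Y w | w. set w \<subseteq> Y}"

definition fs_rep :: "'a list set \<Rightarrow> 'a list" where
  "fs_rep s = (SOME w. w \<in> s)"

definition fs_mult :: "('a, 'b) monoid_scheme \<Rightarrow> 'a set \<Rightarrow> 'a list set \<Rightarrow> 'a list set \<Rightarrow> 'a list set" where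
  "fs_mult G Y s t = fact_class G Y (fs_rep s @ fs_rep t)"

definition fs_pow :: "('a, 'b) monoid_scheme \<Rightarrow> 'a set \<Rightarrow> 'a list set \<Rightarrow> nat \<Rightarrow> 'a list set" where
  "fs_pow G Y s n = fact_class G Y (concat (replicate n (fs_rep s)))"

definition alpha :: "('a, 'b) monoid_scheme \<Rightarrow> 'a list set \<Rightarrow> 'a" where
  "alpha G s = foldr (\<otimes>\<^bsub>G\<^esub>) (fs_rep s) \<one>\<^bsub>G\<^esub>"

definition positive :: "('a, 'b) monoid_scheme \<Rightarrow> 'a set \<Rightarrow> 'a \<Rightarrow> bool" where
  "positive G Y g \<longleftrightarrow> (\<exists>s \<in> fact_sg G Y. alpha G s = g)"

definition G_sub :: "('a, 'b) monoid_scheme \<Rightarrow> 'a list set \<Rightarrow> 'a set" where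
  "G_sub G s = generate G (set (fs_rep s))"

definition fact_sg_full :: "('a, 'b) monoid_scheme \<Rightarrow> 'a set \<Rightarrow> 'a list set set" where
  "fact_sg_full G Y = {s \<in> fact_sg G Y. G_sub G s = carrier G}"

definition center :: "('a, 'b) monoid_scheme \<Rightarrow> 'a set" where
  "center G = {z \<in> carrier G. \<forall>g \<in> carrier G. z \<otimes>\<^bsub>G\<^esub> g = g \<otimes>\<^bsub>G\<^esub> z}"

text \<open>p_i: least p \<ge> 1 with y^p central (the same for all y in a conjugacy class).\<close>
definition central_period :: "('a, 'b) monoid_scheme \<Rightarrow> 'a \<Rightarrow> nat" where
  "central_period G y = (LEAST p. p \<ge> 1 \<and> y [^]\<^bsub>G\<^esub> p \<in> center G)"

definition class_list :: "('a, 'b) monoid_scheme \<Rightarrow> 'a set \<Rightarrow> 'a set list" where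
  "class_list G Y = (SOME cs. distinct cs \<and> set cs = conj_class G ` Y)"

definition elem_list :: "'a set \<Rightarrow> 'a list" where
  "elem_list C = (SOME ys. distinct ys \<and> set ys = C)"

definition s_Gamma_word :: "('a, 'b) monoid_scheme \<Rightarrow> 'a set \<Rightarrow> 'a list" where
  "s_Gamma_word G Y = concat (map (\<lambda>C. concat (map (\<lambda>y. replicate (central_period G y) y)
      (elem_list C))) (class_list G Y))"

definition s_Gamma :: "('a, 'b) monoid_scheme \<Rightarrow> 'a set \<Rightarrow> 'a list set" where
  "s_Gamma G Y = fact_class G Y (s_Gamma_word G Y)"

end

theory Submission
  imports Defs
begin


definition lprod :: "('a, 'b) monoid_scheme \<Rightarrow> 'a list \<Rightarrow> 'a" where
  "lprod G w = foldr (\<otimes>\<^bsub>G\<^esub>) w \<one>\<^bsub>G\<^esub>"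

context group begin

lemma foldr_closed: "set c \<subseteq> carrier G \<Longrightarrow> z \<in> carrier G \<Longrightarrow> foldr (\<otimes>) c z \<in> carrier G"
  by (induction c) auto

lemma lprod_closed[simp]: "set c \<subseteq> carrier G \<Longrightarrow> lprod G c \<in> carrier G"
  unfolding lprod_def by (rule foldr_closed) auto

lemma lprod_Nil[simp]: "lprod G [] = \<one>" by (simp add: lprod_def)
lemma lprod_Cons[simp]: "lprod G (x # c) = x \<otimes> lprod G c" by (simp add: lprod_def)

lemma lprod_append: "set a \<subseteq> carrier G \<Longrightarrow> set b \<subseteq> carrier G \<Longrightarrow> lprod G (a @ b) = lprod G a \<otimes> lprod G b"
  by (induction a) (auto simp: m_assoc)

lemma lprod_replicate: "x \<in> carrier G \<Longrightarrow> lprod G (replicate n x) = x [^] n"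
proof (induction n)
  case (Suc n)
  have "lprod G (replicate (Suc n) x) = x \<otimes> x [^] n" using Suc by simp
  also have "\<dots> = x [^] Suc n" by (rule nat_pow_Suc2[symmetric]) (rule Suc.prems)
  finally show ?case .
qed simp

lemma lprod_concat_replicate: "set w \<subseteq> carrier G \<Longrightarrow> lprod G (concat (replicate n w)) = lprod G w [^] n"
proof (induction n)
  case (Suc n)
  have "set (concat (replicate n w)) \<subseteq> carrier G" using Suc.prems by auto
  then have "lprod G (concat (replicate (Suc n) w)) = lprod G w \<otimes> lprod G w [^] n"
    using Suc by (simp add: lprod_append)
  also have "\<dots> = lprod G w [^] Suc n" by (rule nat_pow_Suc2[symmetric]) (use Suc.prems in simp)
  finally show ?case .
qed simp

lemma lprod_conj: "y \<in> carrier G \<Longrightarrow> set u \<subseteq> carrier G \<Longrightarrow>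
   lprod G (map (\<lambda>x. inv y \<otimes> x \<otimes> y) u) = inv y \<otimes> lprod G u \<otimes> y"
proof (induction u)
  case Nil then show ?case by simp
next
  case (Cons a u)
  then have "lprod G (map (\<lambda>x. inv y \<otimes> x \<otimes> y) (a # u)) = (inv y \<otimes> a \<otimes> y) \<otimes> (inv y \<otimes> lprod G u \<otimes> y)" by simp
  also have "\<dots> = inv y \<otimes> (a \<otimes> lprod G u) \<otimes> y" using Cons.prems
    by (simp add: m_assoc[symmetric]) (simp add: m_assoc)
  finally show ?case by simp
qed

lemma fact_cong_foldr:
  assumes Y: "Y \<subseteq> carrier G" and fc: "fact_cong G Y u v"
  shows "\<forall>z \<in> carrier G. foldr (\<otimes>) u z = foldr (\<otimes>) v z"
  using fc
proof (induction rule: fact_cong.induct)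
  case (fc_ctxt a c u v)
  show ?case
  proof
    fix z assume z: "z \<in> carrier G"
    have "foldr (\<otimes>) c z \<in> carrier G" using fc_ctxt.hyps(2) Y z by (intro foldr_closed) auto
    then show "foldr (\<otimes>) (a @ u @ c) z = foldr (\<otimes>) (a @ v @ c) z" using fc_ctxt.IH by simp
  qed
next
  case (fc_move1 g1 g2)
  then have g: "g1 \<in> carrier G" "g2 \<in> carrier G" using Y by auto
  show ?case using g by (simp add: m_assoc[symmetric])
next
  case (fc_move2 g1 g2)
  then have g: "g1 \<in> carrier G" "g2 \<in> carrier G" using Y by auto
  show ?case using g by (simp add: m_assoc inv_solve_left)
qed auto

lemma fact_cong_lprod:
  "Y \<subseteq> carrier G \<Longrightarrow> fact_cong G Y u v \<Longrightarrow> lprod G u = lprod G v"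
  using fact_cong_foldr unfolding lprod_def by blast

lemma fact_cong_subgroup:
  assumes Y: "Y \<subseteq> carrier G" and fc: "fact_cong G Y u v"
  shows "\<forall>H. subgroup H G \<longrightarrow> (set u \<subseteq> H \<longleftrightarrow> set v \<subseteq> H)"
  using fc
proof (induction rule: fact_cong.induct)
  case (fc_move1 g1 g2)
  then have g: "g1 \<in> carrier G" "g2 \<in> carrier G" using Y by auto
  show ?case
  proof (intro allI impI)
    fix H assume H: "subgroup H G"
    have e: "g2 \<otimes> (inv g2 \<otimes> g1 \<otimes> g2) \<otimes> inv g2 = g1" using g
      by (simp add: m_assoc[symmetric]) (simp add: m_assoc)
    show "set [g1, g2] \<subseteq> H \<longleftrightarrow> set [g2, inv g2 \<otimes> g1 \<otimes> g2] \<subseteq> H"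
      using H e by (auto intro!: subgroup.m_closed subgroup.m_inv_closed)
        (metis subgroup.m_closed subgroup.m_inv_closed)
  qed
next
  case (fc_move2 g1 g2)
  then have g: "g1 \<in> carrier G" "g2 \<in> carrier G" using Y by auto
  show ?case
  proof (intro allI impI)
    fix H assume H: "subgroup H G"
    have e: "inv g1 \<otimes> (g1 \<otimes> g2 \<otimes> inv g1) \<otimes> g1 = g2" using g
      by (simp add: m_assoc[symmetric]) (simp add: m_assoc)
    show "set [g1, g2] \<subseteq> H \<longleftrightarrow> set [g1 \<otimes> g2 \<otimes> inv g1, g1] \<subseteq> H"
      using H e by (auto intro!: subgroup.m_closed subgroup.m_inv_closed)
        (metis subgroup.m_closed subgroup.m_inv_closed)
  qed
qed auto

end

lemma fs_rep_class: "set x \<subseteq> Y \<Longrightarrow> fs_rep (fact_class G Y x) \<in> fact_class G Y x"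
  unfolding fs_rep_def by (rule someI[of _ x]) (simp add: fact_class_def fc_refl)

lemma alpha_class:
  assumes "group G" "Y \<subseteq> carrier G" "set x \<subseteq> Y"
  shows "alpha G (fact_class G Y x) = lprod G x"
proof -
  have "fact_cong G Y x (fs_rep (fact_class G Y x))"
    using fs_rep_class[OF assms(3), where G=G] by (simp add: fact_class_def)
  then show ?thesis using group.fact_cong_lprod[OF assms(1,2)] unfolding alpha_def lprod_def
    by metis
qed

lemma positive_iff:
  assumes "group G" "Y \<subseteq> carrier G"
  shows "positive G Y g \<longleftrightarrow> (\<exists>w. set w \<subseteq> Y \<and> lprod G w = g)"
proof
  assume "positive G Y g"
  then obtain w where "set w \<subseteq> Y" "alpha G (fact_class G Y w) = g"
    unfolding positive_def fact_sg_def by auto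
  then show "\<exists>w. set w \<subseteq> Y \<and> lprod G w = g" using alpha_class[OF assms] by auto
next
  assume "\<exists>w. set w \<subseteq> Y \<and> lprod G w = g"
  then obtain w where "set w \<subseteq> Y" "lprod G w = g" by auto
  then show "positive G Y g" unfolding positive_def fact_sg_def using alpha_class[OF assms]
    by (intro bexI[of _ "fact_class G Y w"]) auto
qed

lemma eval_word_Cons: "eval_word G ((y, b) # w) = (if b then y else inv\<^bsub>G\<^esub> y) \<otimes>\<^bsub>G\<^esub> eval_word G w"
  by (simp add: eval_word_def)

lemma eval_word_Nil: "eval_word G [] = \<one>\<^bsub>G\<^esub>"
  by (simp add: eval_word_def)

lemma eval_in_subgroup:
  assumes "group G" "subgroup H G" "set (map fst w) \<subseteq> H"
  shows "eval_word G w \<in> H"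
  using assms(3)
proof (induction w)
  case Nil then show ?case using assms(2) by (simp add: eval_word_Nil subgroup.one_closed)
next
  case (Cons a w)
  obtain y b where a: "a = (y, b)" by force
  then show ?case using Cons assms(2)
    by (auto simp: eval_word_Cons intro!: subgroup.m_closed subgroup.m_inv_closed)
qed

lemma Cg: assumes "C_group G Y"
  shows "group G" "Y \<subseteq> carrier G"
    "\<And>g y. g \<in> carrier G \<Longrightarrow> y \<in> Y \<Longrightarrow> g \<otimes>\<^bsub>G\<^esub> y \<otimes>\<^bsub>G\<^esub> inv\<^bsub>G\<^esub> g \<in> Y"
    "\<And>g. g \<in> carrier G \<Longrightarrow> \<exists>w. set (map fst w) \<subseteq> Y \<and> eval_word G w = g"
  using assms unfolding C_group_def by auto

lemma subgroup_Y_carrier: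
  assumes "C_group G Y" "subgroup H G" "Y \<subseteq> H"
  shows "carrier G \<subseteq> H"
proof
  fix g assume "g \<in> carrier G"
  then obtain w where "set (map fst w) \<subseteq> Y" "eval_word G w = g" using Cg(4)[OF assms(1)] by blast
  then show "g \<in> H" using eval_in_subgroup[OF Cg(1)[OF assms(1)] assms(2)] assms(3) by blast
qed

lemma full_class:
  assumes "C_group G Y" "set w \<subseteq> Y" "Y \<subseteq> set w"
  shows "fact_class G Y w \<in> fact_sg_full G Y"
proof -
  interpret group G by (rule Cg(1)[OF assms(1)])
  have Y: "Y \<subseteq> carrier G" by (rule Cg(2)[OF assms(1)])
  define r where "r = fs_rep (fact_class G Y w)"
  have r: "set r \<subseteq> Y" "fact_cong G Y w r"
    using fs_rep_class[OF assms(2), where G=G] unfolding r_def fact_class_def by auto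
  define H where "H = generate G (set r)"
  have H: "subgroup H G" unfolding H_def using r Y by (intro generate_is_subgroup) auto
  have "set r \<subseteq> H" unfolding H_def by (auto intro: generate.incl)
  then have "set w \<subseteq> H" using fact_cong_subgroup[OF Y r(2)] H by blast
  then have "carrier G \<subseteq> H" using subgroup_Y_carrier[OF assms(1) H] assms(3) by blast
  moreover have "H \<subseteq> carrier G" unfolding H_def using r Y by (intro generate_incl) auto
  ultimately have "G_sub G (fact_class G Y w) = carrier G"
    unfolding G_sub_def r_def[symmetric] H_def[symmetric] by blast
  then show ?thesis unfolding fact_sg_full_def fact_sg_def using assms(2) by auto
qed

context group begin
lemma cancel_l1[simp]: "y \<in> carrier G \<Longrightarrow> x \<in> carrier G \<Longrightarrow> y \<otimes> (inv y \<otimes> x) = x"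
  by (simp add: m_assoc[symmetric])
lemma cancel_l2[simp]: "y \<in> carrier G \<Longrightarrow> x \<in> carrier G \<Longrightarrow> inv y \<otimes> (y \<otimes> x) = x"
  by (simp add: m_assoc[symmetric])

lemma part1_word:
  assumes "C_group G Y" "set (map fst w) \<subseteq> Y"
  shows "\<exists>u v. set u \<subseteq> Y \<and> set v \<subseteq> Y \<and> eval_word G w = lprod G u \<otimes> inv lprod G v"
proof -
  have Y: "Y \<subseteq> carrier G" by (rule Cg(2)[OF assms(1)])
  show ?thesis using assms(2)
proof (induction w)
  case Nil then show ?case by (intro exI[of _ "[]"]) (simp add: eval_word_Nil)
next
  case (Cons a w)
  obtain y b where a: "a = (y, b)" by force
  have y: "y \<in> Y" using Cons.prems a by auto
  then have yc: "y \<in> carrier G" using Y by auto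
  obtain u v where uv: "set u \<subseteq> Y" "set v \<subseteq> Y" "eval_word G w = lprod G u \<otimes> inv lprod G v"
    using Cons by auto
  have uc: "set u \<subseteq> carrier G" "set v \<subseteq> carrier G" using uv Y by auto
  show ?case
  proof (cases b)
    case True
    then show ?thesis using uv y yc uc a
      by (intro exI[of _ "y # u"] exI[of _ v]) (simp add: eval_word_Cons m_assoc)
  next
    case False
    define u' where "u' = map (\<lambda>x. inv y \<otimes> x \<otimes> y) u"
    have "set u' \<subseteq> Y" unfolding u'_def using uv(1) Cg(3)[OF assms(1), of "inv y"] yc
      by auto
    moreover have "set (v @ [y]) \<subseteq> Y" using uv y by auto
    moreover have "eval_word G (a # w) = lprod G u' \<otimes> inv lprod G (v @ [y])"
    proof -
      have "lprod G u' = inv y \<otimes> lprod G u \<otimes> y" unfolding u'_def using lprod_conj yc uc by blast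
      moreover have "lprod G (v @ [y]) = lprod G v \<otimes> y" using lprod_append[of v "[y]"] uc yc by simp
      ultimately show ?thesis using a False uv uc yc
        by (simp add: eval_word_Cons inv_mult_group m_assoc)
    qed
    ultimately show ?thesis by blast
  qed
qed
qed
end




lemma concat_map_concat: "concat (map (\<lambda>C. concat (f C)) cl) = concat (concat (map f cl))"
  by (induction cl) auto

context group begin

lemma center_D: "z \<in> center G \<Longrightarrow> z \<in> carrier G"
  "z \<in> center G \<Longrightarrow> g \<in> carrier G \<Longrightarrow> z \<otimes> g = g \<otimes> z"
  unfolding center_def by auto

lemma center_mult: "a \<in> center G \<Longrightarrow> b \<in> center G \<Longrightarrow> a \<otimes> b \<in> center G"
  proof -
  assume a: "a \<in> center G" "b \<in> center G"
  have c: "a \<in> carrier G" "b \<in> carrier G" using a center_D(1) by auto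
  show ?thesis unfolding center_def
  proof (safe)
    show "a \<otimes> b \<in> carrier G" using c by simp
    fix g assume g: "g \<in> carrier G"
    have "a \<otimes> b \<otimes> g = a \<otimes> (b \<otimes> g)" using c g by (simp add: m_assoc)
    also have "\<dots> = a \<otimes> (g \<otimes> b)" using center_D(2)[OF a(2) g] by simp
    also have "\<dots> = (a \<otimes> g) \<otimes> b" using c g by (simp add: m_assoc)
    also have "\<dots> = (g \<otimes> a) \<otimes> b" using center_D(2)[OF a(1) g] by simp
    also have "\<dots> = g \<otimes> (a \<otimes> b)" using c g by (simp add: m_assoc)
    finally show "a \<otimes> b \<otimes> g = g \<otimes> (a \<otimes> b)" .
  qed
qed

lemma center_one: "\<one> \<in> center G" unfolding center_def by auto

lemma comm_inv: "z \<in> carrier G \<Longrightarrow> g \<in> carrier G \<Longrightarrow> z \<otimes> g = g \<otimes> z \<Longrightarrow> inv z \<otimes> g = g \<otimes> inv z"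
proof -
  assume a: "z \<in> carrier G" "g \<in> carrier G" "z \<otimes> g = g \<otimes> z"
  have "g \<otimes> inv z = inv z \<otimes> (z \<otimes> g) \<otimes> inv z" using a(1,2) by simp
  also have "\<dots> = inv z \<otimes> (g \<otimes> z) \<otimes> inv z" by (simp only: a(3))
  also have "\<dots> = inv z \<otimes> g" using a(1,2) by (simp add: m_assoc)
  finally show ?thesis by simp
qed

lemma comm_eval:
  assumes "x \<in> carrier G" "\<forall>y\<in>Y. x \<otimes> y = y \<otimes> x" "Y \<subseteq> carrier G" "set (map fst w) \<subseteq> Y"
  shows "x \<otimes> eval_word G w = eval_word G w \<otimes> x"
  using assms(4)
proof (induction w)
  case Nil then show ?case using assms by (simp add: eval_word_Nil)
next
  case (Cons a w)
  obtain y b where a: "a = (y, b)" by force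
  have y: "y \<in> Y" "y \<in> carrier G" using Cons.prems a assms(3) by auto
  have e: "eval_word G w \<in> carrier G"
    using eval_in_subgroup[OF is_group subgroup_self, of w] Cons.prems assms(3) by auto
  have c: "x \<otimes> y = y \<otimes> x" using y assms(2) by auto
  have ci: "x \<otimes> inv y = inv y \<otimes> x" using comm_inv[OF y(2) assms(1)] c by simp
  have IH: "x \<otimes> eval_word G w = eval_word G w \<otimes> x" using Cons by auto
  show ?case
  proof (cases b)
    case True
    have "x \<otimes> (y \<otimes> eval_word G w) = (x \<otimes> y) \<otimes> eval_word G w" using y e assms(1) by (simp add: m_assoc)
    also have "\<dots> = (y \<otimes> x) \<otimes> eval_word G w" by (simp only: c)
    also have "\<dots> = y \<otimes> (x \<otimes> eval_word G w)" using y e assms(1) by (simp add: m_assoc)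
    also have "\<dots> = y \<otimes> (eval_word G w \<otimes> x)" by (simp only: IH)
    also have "\<dots> = (y \<otimes> eval_word G w) \<otimes> x" using y e assms(1) by (simp add: m_assoc)
    finally show ?thesis using a True by (simp add: eval_word_Cons)
  next
    case False
    have "x \<otimes> (inv y \<otimes> eval_word G w) = (x \<otimes> inv y) \<otimes> eval_word G w" using y e assms(1) by (simp add: m_assoc)
    also have "\<dots> = (inv y \<otimes> x) \<otimes> eval_word G w" by (simp only: ci)
    also have "\<dots> = inv y \<otimes> (x \<otimes> eval_word G w)" using y e assms(1) by (simp add: m_assoc)
    also have "\<dots> = inv y \<otimes> (eval_word G w \<otimes> x)" by (simp only: IH)
    also have "\<dots> = (inv y \<otimes> eval_word G w) \<otimes> x" using y e assms(1) by (simp add: m_assoc)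
    finally show ?thesis using a False by (simp add: eval_word_Cons)
  qed
qed

lemma period_exists:
  assumes CG: "C_group G Y" and fin: "finite Y" and yY: "y \<in> Y"
  shows "\<exists>p::nat. p \<ge> 1 \<and> y [^] p \<in> center G"
proof -
  have Y: "Y \<subseteq> carrier G" by (rule Cg(2)[OF CG])
  have yc: "y \<in> carrier G" using yY Y by auto
  define f where "f = (\<lambda>n::nat. restrict (\<lambda>x. inv (y [^] n) \<otimes> x \<otimes> y [^] n) Y)"
  have "range f \<subseteq> (\<Pi>\<^sub>E x\<in>Y. Y)"
  proof
    fix h assume "h \<in> range f"
    then obtain n where n: "h = f n" by auto
    have "inv (y [^] n) \<otimes> x \<otimes> inv (inv (y [^] n)) \<in> Y" if "x \<in> Y" for x
      using Cg(3)[OF CG, of "inv (y [^] n)" x] that yc by auto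
    then show "h \<in> (\<Pi>\<^sub>E x\<in>Y. Y)" unfolding n f_def using yc by auto
  qed
  moreover have "finite (\<Pi>\<^sub>E x\<in>Y. Y)" using finite_PiE[OF fin fin] .
  ultimately have fr: "finite (range f)" by (rule finite_subset)
  have ninj: "\<not> inj f"
  proof
    assume "inj f"
    then have "finite (UNIV :: nat set)" using finite_imageD[OF fr] by blast
    then show False by simp
  qed
  then obtain i0 j0 where ij0: "f i0 = f j0" "i0 \<noteq> j0" unfolding inj_def by auto
  obtain i j where ij: "f i = f j" "i < j"
  proof (cases "i0 < j0")
    case True then show ?thesis using that ij0 by blast
  next
    case False then have "j0 < i0" using ij0(2) by simp
    then show ?thesis using that ij0 by metis
  qed
  define p where "p = j - i"
  have p1: "p \<ge> 1" using ij unfolding p_def by auto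
  define a where "a = y [^] i"
  define b where "b = y [^] p"
  have ab: "a \<in> carrier G" "b \<in> carrier G" unfolding a_def b_def using yc by auto
  have yj: "y [^] j = a \<otimes> b" unfolding a_def b_def p_def using yc ij nat_pow_mult[of y i "j - i"] by simp
  have comm: "b \<otimes> x = x \<otimes> b" if xY: "x \<in> Y" for x
  proof -
    have xc: "x \<in> carrier G" using xY Y by auto
    define x' where "x' = a \<otimes> x \<otimes> inv a"
    have x'Y: "x' \<in> Y" unfolding x'_def using Cg(3)[OF CG, of a x] ab xY by auto
    have fi: "f i x' = inv a \<otimes> x' \<otimes> a" unfolding f_def a_def using x'Y by simp
    have fi2: "inv a \<otimes> x' \<otimes> a = x" unfolding x'_def using ab xc by (simp add: m_assoc)
    have fj: "f j x' = inv (a \<otimes> b) \<otimes> x' \<otimes> (a \<otimes> b)" unfolding f_def yj[symmetric] using x'Y by simp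
    have fj2: "inv (a \<otimes> b) \<otimes> x' \<otimes> (a \<otimes> b) = inv b \<otimes> x \<otimes> b"
      unfolding x'_def using ab xc by (simp add: m_assoc inv_mult_group)
    have "f i x' = x" using fi fi2 by simp
    moreover have "f j x' = inv b \<otimes> x \<otimes> b" using fj fj2 by simp
    ultimately have eq: "inv b \<otimes> x \<otimes> b = x" using ij(1) by metis
    have "b \<otimes> x = b \<otimes> (inv b \<otimes> x \<otimes> b)" by (simp only: eq)
    also have "\<dots> = x \<otimes> b" using ab xc by (simp add: m_assoc)
    finally show ?thesis .
  qed
  have "b \<in> center G" unfolding center_def
  proof (safe)
    show "b \<in> carrier G" by (rule ab)
    fix g assume "g \<in> carrier G"
    from Cg(4)[OF CG this] obtain w where w: "set (map fst w) \<subseteq> Y" "eval_word G w = g" by blast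
    have cY: "\<forall>y\<in>Y. b \<otimes> y = y \<otimes> b" using comm by blast
    from comm_eval[OF ab(2) cY Y w(1)] w(2) show "b \<otimes> g = g \<otimes> b" by simp
  qed
  then have bc: "y [^] p \<in> center G" unfolding b_def .
  show ?thesis
  proof (intro exI[of _ p] conjI)
    show "p \<ge> 1" by (rule p1)
    show "y [^] p \<in> center G" by (rule bc)
  qed
qed

lemma period:
  assumes "C_group G Y" "finite Y" "y \<in> Y"
  shows "central_period G y \<ge> 1" "y [^] central_period G y \<in> center G"
  using LeastI_ex[OF period_exists[OF assms]] unfolding central_period_def by blast+

end


lemma class_list_prop:
  assumes "finite Y"
  shows "distinct (class_list G Y) \<and> set (class_list G Y) = conj_class G ` Y"
proof -
  have "\<exists>cs. distinct cs \<and> set cs = conj_class G ` Y"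
    using finite_distinct_list[OF finite_imageI[OF assms]] by metis
  then show ?thesis unfolding class_list_def
    by (rule someI_ex[of "\<lambda>cs. distinct cs \<and> set cs = conj_class G ` Y"])
qed

lemma elem_list_prop: assumes "finite C" shows "set (elem_list C) = C"
proof -
  have "\<exists>cs. distinct cs \<and> set cs = C"
    using finite_distinct_list[OF assms] by metis
  then have "distinct (elem_list C) \<and> set (elem_list C) = C" unfolding elem_list_def
    by (rule someI_ex[of "\<lambda>cs. distinct cs \<and> set cs = C"])
  then show ?thesis by simp
qed

context group begin

lemma conj_class_sub: assumes "C_group G Y" "y \<in> Y" shows "conj_class G y \<subseteq> Y"
proof
  fix x assume "x \<in> conj_class G y"
  then obtain g where "g \<in> carrier G" "x = g \<otimes> y \<otimes> inv g" unfolding conj_class_def by blast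
  then show "x \<in> Y" using Cg(3)[OF assms(1)] assms(2) by simp
qed

lemma conj_class_self: "y \<in> carrier G \<Longrightarrow> y \<in> conj_class G y"
  unfolding conj_class_def by (intro CollectI exI[of _ \<one>]) simp

definition blocks :: "'a set \<Rightarrow> 'a list list" where
  "blocks Y = concat (map (\<lambda>C. map (\<lambda>y. replicate (central_period G y) y) (elem_list C)) (class_list G Y))"

lemma sgw_blocks: "s_Gamma_word G Y = concat (blocks Y)"
  unfolding s_Gamma_word_def blocks_def by (rule concat_map_concat)

lemma blocks_set:
  assumes CG: "C_group G Y" and fin: "finite Y"
  shows "set (blocks Y) = (\<lambda>y. replicate (central_period G y) y) ` Y"
proof -
  have Y: "Y \<subseteq> carrier G" by (rule Cg(2)[OF CG])
  have "set (blocks Y) = (\<Union>C\<in>conj_class G ` Y. (\<lambda>y. replicate (central_period G y) y) ` set (elem_list C))"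
    unfolding blocks_def using class_list_prop[OF fin, where G=G] by simp
  also have "\<dots> = (\<Union>C\<in>conj_class G ` Y. (\<lambda>y. replicate (central_period G y) y) ` C)"
  proof (rule SUP_cong[OF refl])
    fix C assume "C \<in> conj_class G ` Y"
    then have "finite C" using conj_class_sub[OF CG] fin finite_subset by blast
    then show "(\<lambda>y. replicate (central_period G y) y) ` set (elem_list C) = (\<lambda>y. replicate (central_period G y) y) ` C"
      by (simp add: elem_list_prop)
  qed
  also have "\<dots> = (\<lambda>y. replicate (central_period G y) y) ` (\<Union>C\<in>conj_class G ` Y. C)" by blast
  also have "(\<Union>C\<in>conj_class G ` Y. C) = Y"
    using conj_class_sub[OF CG] conj_class_self Y by blast
  finally show ?thesis .
qed

lemma lprod_concat_center:
  "\<forall>b\<in>set bs. set b \<subseteq> carrier G \<and> lprod G b \<in> center G \<Longrightarrow> lprod G (concat bs) \<in> center G"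
proof (induction bs)
  case Nil then show ?case using center_one by simp
next
  case (Cons b bs)
  then have "set (concat bs) \<subseteq> carrier G" by auto
  then show ?case using Cons by (simp add: lprod_append center_mult)
qed

lemma lprod_concat_remove:
  "\<forall>b\<in>set bs. set b \<subseteq> carrier G \<and> lprod G b \<in> center G \<Longrightarrow> b \<in> set bs \<Longrightarrow>
    lprod G (concat bs) = lprod G b \<otimes> lprod G (concat (remove1 b bs))"
proof (induction bs)
  case Nil then show ?case by simp
next
  case (Cons b' bs)
  have cbs: "set (concat bs) \<subseteq> carrier G" using Cons.prems by auto
  show ?case
  proof (cases "b' = b")
    case True
    then show ?thesis using Cons.prems cbs by (simp add: lprod_append)
  next
    case False
    then have bb: "b \<in> set bs" using Cons.prems by auto
    have b'c: "set b' \<subseteq> carrier G" "lprod G b' \<in> center G" "set b \<subseteq> carrier G" "lprod G b \<in> center G"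
      using Cons.prems bb by auto
    have cr: "set (concat (remove1 b bs)) \<subseteq> carrier G" using cbs set_remove1_subset by fastforce
    have "lprod G (concat (b' # bs)) = lprod G b' \<otimes> lprod G (concat bs)"
      using b'c cbs by (simp add: lprod_append)
    also have "\<dots> = lprod G b' \<otimes> (lprod G b \<otimes> lprod G (concat (remove1 b bs)))"
      using Cons.IH Cons.prems bb by simp
    also have "\<dots> = (lprod G b' \<otimes> lprod G b) \<otimes> lprod G (concat (remove1 b bs))"
      using b'c cr by (simp add: m_assoc)
    also have "lprod G b' \<otimes> lprod G b = lprod G b \<otimes> lprod G b'"
      using center_D(2)[OF b'c(4), of "lprod G b'"] b'c by simp
    also have "(lprod G b \<otimes> lprod G b') \<otimes> lprod G (concat (remove1 b bs))
        = lprod G b \<otimes> lprod G (concat (remove1 b (b' # bs)))"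
      using b'c cr False by (simp add: m_assoc lprod_append)
    finally show ?thesis .
  qed
qed

end

lemma set_replicate_sub: "y \<in> A \<Longrightarrow> set (replicate n y) \<subseteq> A"
  by (induction n) auto

context group begin

lemma blocks_good:
  assumes CG: "C_group G Y" and fin: "finite Y"
  shows "\<forall>b\<in>set (blocks Y). set b \<subseteq> Y \<and> set b \<subseteq> carrier G \<and> lprod G b \<in> center G"
proof
  fix b assume "b \<in> set (blocks Y)"
  then obtain y where y: "y \<in> Y" "b = replicate (central_period G y) y"
    using blocks_set[OF CG fin] by auto
  have yc: "y \<in> carrier G" using y Cg(2)[OF CG] by auto
  show "set b \<subseteq> Y \<and> set b \<subseteq> carrier G \<and> lprod G b \<in> center G"
    using y yc period[OF CG fin y(1)] by (simp add: lprod_replicate)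
qed

lemma sgw_set:
  assumes CG: "C_group G Y" and fin: "finite Y"
  shows "set (s_Gamma_word G Y) = Y"
proof -
  have "set (s_Gamma_word G Y) = (\<Union>b\<in>set (blocks Y). set b)" by (simp add: sgw_blocks)
  also have "\<dots> = (\<Union>y\<in>Y. set (replicate (central_period G y) y))"
    using blocks_set[OF CG fin] by simp
  also have "\<dots> = (\<Union>y\<in>Y. {y})"
  proof (rule SUP_cong[OF refl])
    fix y assume "y \<in> Y"
    then have "central_period G y \<noteq> 0" using period(1)[OF CG fin] by fastforce
    then show "set (replicate (central_period G y) y) = {y}" by simp
  qed
  finally show ?thesis by simp
qed

lemma z_center:
  assumes CG: "C_group G Y" and fin: "finite Y"
  shows "lprod G (s_Gamma_word G Y) \<in> center G"
  unfolding sgw_blocks using lprod_concat_center blocks_good[OF CG fin] by blast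

lemma inv_y:
  assumes CG: "C_group G Y" and fin: "finite Y" and yY: "y \<in> Y"
  shows "\<exists>q. set q \<subseteq> Y \<and> inv y = lprod G q \<otimes> inv (lprod G (s_Gamma_word G Y))"
proof -
  have Y: "Y \<subseteq> carrier G" by (rule Cg(2)[OF CG])
  have yc: "y \<in> carrier G" using yY Y by auto
  define p where "p = central_period G y"
  have p1: "p \<ge> 1" unfolding p_def by (rule period(1)[OF CG fin yY])
  define b where "b = replicate p y"
  have bin: "b \<in> set (blocks Y)" unfolding b_def p_def using blocks_set[OF CG fin] yY by auto
  define R where "R = concat (remove1 b (blocks Y))"
  have good: "\<forall>b\<in>set (blocks Y). set b \<subseteq> Y \<and> set b \<subseteq> carrier G \<and> lprod G b \<in> center G"
    by (rule blocks_good[OF CG fin])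
  have RY: "set R \<subseteq> Y" unfolding R_def using good set_remove1_subset by fastforce
  then have Rc: "set R \<subseteq> carrier G" using Y by auto
  have z: "lprod G (s_Gamma_word G Y) = y [^] p \<otimes> lprod G R"
    unfolding sgw_blocks R_def using lprod_concat_remove[OF _ bin] good yc
    by (simp add: b_def lprod_replicate)
  define q where "q = replicate (p - 1) y @ R"
  have qY: "set q \<subseteq> Y" unfolding q_def using RY yY by auto
  have lq: "lprod G q = y [^] (p - 1) \<otimes> lprod G R"
    unfolding q_def using lprod_append[of "replicate (p - 1) y" R] Rc yc set_replicate_sub[OF yc]
    by (simp add: lprod_replicate)
  have yp: "y [^] p = y \<otimes> y [^] (p - 1)"
    using nat_pow_Suc2[OF yc, of "p - 1"] p1 by simp
  define a where "a = y [^] (p - 1)"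
  define r where "r = lprod G R"
  have ac: "a \<in> carrier G" "r \<in> carrier G" unfolding a_def r_def using yc Rc by auto
  have "lprod G q \<otimes> inv (lprod G (s_Gamma_word G Y)) = a \<otimes> r \<otimes> inv (y \<otimes> a \<otimes> r)"
    unfolding lq z yp a_def r_def by simp
  also have "\<dots> = inv y"
    using ac yc by (simp add: inv_mult_group m_assoc)
  finally show ?thesis using qY by metis
qed

lemma main_word:
  assumes CG: "C_group G Y" and fin: "finite Y" and w: "set (map fst w) \<subseteq> Y"
  shows "\<exists>u (n::nat). set u \<subseteq> Y \<and> eval_word G w = lprod G u \<otimes> inv (lprod G (s_Gamma_word G Y) [^] n)"
  using w
proof (induction w)
  case Nil then show ?case by (intro exI[of _ "[]"] exI[of _ "0::nat"]) (simp add: eval_word_Nil)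
next
  case (Cons a w)
  have Y: "Y \<subseteq> carrier G" by (rule Cg(2)[OF CG])
  define z where "z = lprod G (s_Gamma_word G Y)"
  have zc: "z \<in> center G" unfolding z_def by (rule z_center[OF CG fin])
  then have zc': "z \<in> carrier G" by (rule center_D(1))
  obtain y b where a: "a = (y, b)" by force
  have y: "y \<in> Y" using Cons.prems a by auto
  then have yc: "y \<in> carrier G" using Y by auto
  obtain u n where un: "set u \<subseteq> Y" "eval_word G w = lprod G u \<otimes> inv (z [^] (n::nat))"
    using Cons unfolding z_def by auto
  have uc: "set u \<subseteq> carrier G" using un Y by auto
  show ?case
  proof (cases b)
    case True
    have "eval_word G (a # w) = lprod G (y # u) \<otimes> inv (z [^] n)"
      using a True un uc yc zc' by (simp add: eval_word_Cons m_assoc)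
    then show ?thesis using un y unfolding z_def by (intro exI[of _ "y # u"] exI[of _ n]) simp
  next
    case False
    obtain q where q: "set q \<subseteq> Y" "inv y = lprod G q \<otimes> inv z"
      using inv_y[OF CG fin y] unfolding z_def by blast
    have qc: "set q \<subseteq> carrier G" using q Y by auto
    define U where "U = lprod G u"
    define Q where "Q = lprod G q"
    have UQ: "U \<in> carrier G" "Q \<in> carrier G" unfolding U_def Q_def using uc qc by auto
    have com: "inv z \<otimes> U = U \<otimes> inv z"
      using comm_inv[OF zc' UQ(1) center_D(2)[OF zc UQ(1)]] .
    have zn: "z [^] Suc n = z [^] n \<otimes> z" using zc' by simp
    have "eval_word G (a # w) = (Q \<otimes> inv z) \<otimes> (U \<otimes> inv (z [^] n))"
      using a False un q unfolding U_def Q_def by (simp add: eval_word_Cons)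
    also have "\<dots> = Q \<otimes> (inv z \<otimes> U) \<otimes> inv (z [^] n)"
      using UQ zc' by (simp add: m_assoc)
    also have "\<dots> = Q \<otimes> (U \<otimes> inv z) \<otimes> inv (z [^] n)" by (simp only: com)
    also have "\<dots> = (Q \<otimes> U) \<otimes> inv (z [^] Suc n)"
      using UQ zc' unfolding zn by (simp add: m_assoc inv_mult_group)
    also have "Q \<otimes> U = lprod G (q @ u)" unfolding Q_def U_def using lprod_append qc uc by simp
    finally show ?thesis using q un unfolding z_def
      by (intro exI[of _ "q @ u"] exI[of _ "Suc n"]) simp
  qed
qed

end

context group begin

lemma part3:
  assumes CG: "C_group G Y" and fin: "finite Y" and g: "g \<in> carrier G"
  shows "\<exists>n::nat. \<exists>s1 \<in> fact_sg_full G Y. g = alpha G s1 \<otimes> inv alpha G (fs_pow G Y (s_Gamma G Y) n)"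
proof -
  have Y: "Y \<subseteq> carrier G" by (rule Cg(2)[OF CG])
  obtain w where w: "set (map fst w) \<subseteq> Y" "eval_word G w = g" using Cg(4)[OF CG g] by blast
  define sw where "sw = s_Gamma_word G Y"
  define z where "z = lprod G sw"
  have swY: "set sw = Y" unfolding sw_def by (rule sgw_set[OF CG fin])
  have zc: "z \<in> carrier G" unfolding z_def using swY Y by simp
  obtain u n where un: "set u \<subseteq> Y" "g = lprod G u \<otimes> inv (z [^] (n::nat))"
    using main_word[OF CG fin w(1)] w(2) unfolding z_def sw_def by blast
  have uc: "set u \<subseteq> carrier G" using un Y by auto
  define s1 where "s1 = fact_class G Y (u @ sw)"
  have us1: "set (u @ sw) \<subseteq> Y" using un swY by auto
  have us2: "Y \<subseteq> set (u @ sw)" using swY by auto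
  have s1: "s1 \<in> fact_sg_full G Y" unfolding s1_def by (rule full_class[OF CG us1 us2])
  have a1: "alpha G s1 = lprod G u \<otimes> z"
    unfolding s1_def z_def using alpha_class[OF is_group Y us1] lprod_append[of u sw] uc Y swY
    by simp
  define r where "r = fs_rep (fact_class G Y sw)"
  have r: "set r \<subseteq> Y" "fact_cong G Y sw r"
    using fs_rep_class[of sw Y G] swY unfolding r_def fact_class_def by auto
  have lr: "lprod G r = z" unfolding z_def using fact_cong_lprod[OF Y r(2)] by simp
  have a2: "alpha G (fs_pow G Y (s_Gamma G Y) (Suc n)) = z [^] Suc n"
  proof -
    have "set (concat (replicate (Suc n) r)) \<subseteq> Y" using r(1) by (induction n) auto
    then have "alpha G (fs_pow G Y (s_Gamma G Y) (Suc n)) = lprod G (concat (replicate (Suc n) r))"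
      unfolding fs_pow_def s_Gamma_def sw_def[symmetric] r_def[symmetric]
      using alpha_class[OF is_group Y] by blast
    also have "\<dots> = lprod G r [^] Suc n" using lprod_concat_replicate r(1) Y by blast
    finally show ?thesis using lr by simp
  qed
  define U where "U = lprod G u"
  have Uc: "U \<in> carrier G" unfolding U_def using uc by simp
  have "alpha G s1 \<otimes> inv alpha G (fs_pow G Y (s_Gamma G Y) (Suc n)) = (U \<otimes> z) \<otimes> inv (z [^] n \<otimes> z)"
    unfolding a1 a2 U_def using zc by simp
  also have "\<dots> = U \<otimes> inv (z [^] n)" using Uc zc by (simp add: inv_mult_group m_assoc)
  also have "\<dots> = g" using un unfolding U_def by simp
  finally show ?thesis using s1 by metis
qed

end

theorem lemma2p18:
  assumes "C_group G Y"
  shows "(\<forall>g \<in> carrier G. \<exists>g1 g2. positive G Y g1 \<and> positive G Y g2 \<and> g = g1 \<otimes>\<^bsub>G\<^esub> inv\<^bsub>G\<^esub> g2)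
    \<and> (\<forall>g g1 g2. positive G Y g1 \<longrightarrow> positive G Y g2 \<longrightarrow> g = g1 \<otimes>\<^bsub>G\<^esub> inv\<^bsub>G\<^esub> g2 \<longrightarrow>
          (g \<in> derived G (carrier G) \<longleftrightarrow> ab G g1 = ab G g2))
    \<and> (finite_C_group G Y \<longrightarrow>
        (\<forall>g \<in> carrier G. \<exists>n::nat. \<exists>s1 \<in> fact_sg_full G Y.
            g = alpha G s1 \<otimes>\<^bsub>G\<^esub> inv\<^bsub>G\<^esub> alpha G (fs_pow G Y (s_Gamma G Y) n)))"
proof (intro conjI)
  have grp: "group G" by (rule Cg(1)[OF assms])
  have Y: "Y \<subseteq> carrier G" by (rule Cg(2)[OF assms])
  show "\<forall>g \<in> carrier G. \<exists>g1 g2. positive G Y g1 \<and> positive G Y g2 \<and> g = g1 \<otimes>\<^bsub>G\<^esub> inv\<^bsub>G\<^esub> g2"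
  proof
    fix g assume g: "g \<in> carrier G"
    obtain w where w: "set (map fst w) \<subseteq> Y" "eval_word G w = g" using Cg(4)[OF assms g] by blast
    obtain u v where uv: "set u \<subseteq> Y" "set v \<subseteq> Y" "eval_word G w = lprod G u \<otimes>\<^bsub>G\<^esub> inv\<^bsub>G\<^esub> lprod G v"
      using group.part1_word[OF grp assms w(1)] by blast
    show "\<exists>g1 g2. positive G Y g1 \<and> positive G Y g2 \<and> g = g1 \<otimes>\<^bsub>G\<^esub> inv\<^bsub>G\<^esub> g2"
      using uv w(2) positive_iff[OF grp Y] by metis
  qed
  show "\<forall>g g1 g2. positive G Y g1 \<longrightarrow> positive G Y g2 \<longrightarrow> g = g1 \<otimes>\<^bsub>G\<^esub> inv\<^bsub>G\<^esub> g2 \<longrightarrow>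
          (g \<in> derived G (carrier G) \<longleftrightarrow> ab G g1 = ab G g2)"
  proof (intro allI impI)
    fix g g1 g2 assume p1: "positive G Y g1" and p2: "positive G Y g2" and gg: "g = g1 \<otimes>\<^bsub>G\<^esub> inv\<^bsub>G\<^esub> g2"
    obtain w1 where w1: "set w1 \<subseteq> Y" "lprod G w1 = g1" using p1 positive_iff[OF grp Y] by blast
    obtain w2 where w2: "set w2 \<subseteq> Y" "lprod G w2 = g2" using p2 positive_iff[OF grp Y] by blast
    have g1c: "g1 \<in> carrier G" using w1 Y group.lprod_closed[OF grp, of w1] by auto
    have g2c: "g2 \<in> carrier G" using w2 Y group.lprod_closed[OF grp, of w2] by auto
    define H where "H = derived G (carrier G)"
    have H: "subgroup H G" unfolding H_def by (rule group.derived_is_subgroup[OF grp]) simp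
    show "g \<in> derived G (carrier G) \<longleftrightarrow> ab G g1 = ab G g2"
    proof
      assume "g \<in> derived G (carrier G)"
      then have "g1 \<otimes>\<^bsub>G\<^esub> inv\<^bsub>G\<^esub> g2 \<in> H" using gg H_def by simp
      then have "g1 \<in> H #>\<^bsub>G\<^esub> g2" using subgroup.rcos_module_rev[OF H grp g2c g1c] by blast
      then have "H #>\<^bsub>G\<^esub> g2 = H #>\<^bsub>G\<^esub> g1" using group.repr_independence[OF grp _ g2c H] by blast
      then show "ab G g1 = ab G g2" unfolding ab_def H_def by simp
    next
      assume "ab G g1 = ab G g2"
      then have e: "H #>\<^bsub>G\<^esub> g1 = H #>\<^bsub>G\<^esub> g2" unfolding ab_def H_def by simp
      have "g1 \<in> H #>\<^bsub>G\<^esub> g1" using group.rcos_self[OF grp g1c H] .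
      then have "g1 \<in> H #>\<^bsub>G\<^esub> g2" using e by simp
      then have "g1 \<otimes>\<^bsub>G\<^esub> inv\<^bsub>G\<^esub> g2 \<in> H" using subgroup.rcos_module_imp[OF H grp g2c] by blast
      then show "g \<in> derived G (carrier G)" using gg H_def by simp
    qed
  qed
  show "finite_C_group G Y \<longrightarrow>
        (\<forall>g \<in> carrier G. \<exists>n::nat. \<exists>s1 \<in> fact_sg_full G Y.
            g = alpha G s1 \<otimes>\<^bsub>G\<^esub> inv\<^bsub>G\<^esub> alpha G (fs_pow G Y (s_Gamma G Y) n))"
  proof (intro impI ballI)
    fix g assume "finite_C_group G Y" "g \<in> carrier G"
    then show "\<exists>n::nat. \<exists>s1 \<in> fact_sg_full G Y.
            g = alpha G s1 \<otimes>\<^bsub>G\<^esub> inv\<^bsub>G\<^esub> alpha G (fs_pow G Y (s_Gamma G Y) n)"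
      using group.part3[OF grp assms] unfolding finite_C_group_def by blast
  qed
qed

end
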